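(* Let $G$ be a finite graph with minimum degree at least $3$, let $x_0$ be a vertex of $G$, let $P$ be a longest path in $G$ starting at $x_0$, and let $(S,T)$ be the Pósa pair of $P$. Let $T_1$ be the set of vertices $t\in T$ having exactly one neighbor in $S$. Let $G^*$ be the graph on vertex set $S\cup(T\setminus T_1)$ whose edges are the edges of $G$ between vertices of $S\cup (T\setminus T_1)$ having at least one endpoint in $S$, and let $d(v;G^* )$ denote the degree of $v$ in $G^*$. Let $S_2=\{v\in S: d(v;G^* )=2\}$. Then: (i) No vertex of $S_2$ is adjacent in $G^*$ both to a vertex of $S_2$ and to a vertex of $T\setminus T_1$. (ii) Write $s=|S|$, $t=|T|$, $t_1=|T_1|$, and suppose $e(S\cup T)=(1+\sigma)(s+t)$ for some $\sigma>0$, where $e(S\cup T)$ is the number of edges of $G$ with both endpoints in $S\cup T$. Then $$s-2\sigma(s+t)\le t_1\le s,\qquad \sum_{v\in S\cup(T\setminus T_1)}\bigl[d(v;G^* )-2\bigr]\le 2\sigma(s+t).$$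
   Context: Rotations and Pósa sets: If $Q=x_0x_1\dots x_h$ is a path from $x_0$ and $\{x_h,x_i\}$ is an edge of $G$ for some $i<h-1$, then $Q'=x_0\dots x_i x_h x_{h-1}\dots x_{i+1}$ is again a path from $x_0$ of the same length, said to be obtained from $Q$ by a rotation. For a longest path $P=x_0\dots x_h$ from $x_0$, $S$ is the set consisting of $x_h$ and the endpoints (other than $x_0$) of all paths obtainable from $P$ by any finite sequence of rotations, and $T=N(S)$ is the set of vertices not in $S$ having a neighbor in $S$. *)

theory Defs
  imports Complex_Main
begin

definition fin_graph :: "'a set \<Rightarrow> ('a \<Rightarrow> 'a \<Rightarrow> bool) \<Rightarrow> bool" where
  "fin_graph V E \<longleftrightarrow> finite V \<and> (\<forall>x y. E x y \<longrightarrow> x \<in> V \<and> y \<in> V)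
     \<and> (\<forall>x y. E x y \<longrightarrow> E y x) \<and> (\<forall>x. \<not> E x x)"

definition degree :: "'a set \<Rightarrow> ('a \<Rightarrow> 'a \<Rightarrow> bool) \<Rightarrow> 'a \<Rightarrow> nat" where
  "degree V E v = card {u \<in> V. E v u}"

text \<open>A path is a nonempty list of distinct vertices, consecutive ones adjacent.
  Its length is the number of edges, i.e. length xs - 1; it starts at hd xs.\<close>
definition is_path :: "'a set \<Rightarrow> ('a \<Rightarrow> 'a \<Rightarrow> bool) \<Rightarrow> 'a list \<Rightarrow> bool" where
  "is_path V E xs \<longleftrightarrow> xs \<noteq> [] \<and> distinct xs \<and> set xs \<subseteq> V
     \<and> (\<forall>i. Suc i < length xs \<longrightarrow> E (xs ! i) (xs ! Suc i))"

definition longest_path_from :: "'a set \<Rightarrow> ('a \<Rightarrow> 'a \<Rightarrow> bool) \<Rightarrow> 'a \<Rightarrow> 'a list \<Rightarrow> bool" where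
  "longest_path_from V E x0 P \<longleftrightarrow> is_path V E P \<and> hd P = x0
     \<and> (\<forall>Q. is_path V E Q \<and> hd Q = x0 \<longrightarrow> length Q \<le> length P)"

text \<open>Rotation: Q = x_0 ... x_h, edge {x_h, x_i} with i < h - 1, gives
  x_0 ... x_i x_h x_(h-1) ... x_(i+1).  (h = length Q - 1.)\<close>
definition rotation :: "('a \<Rightarrow> 'a \<Rightarrow> bool) \<Rightarrow> 'a list \<Rightarrow> 'a list \<Rightarrow> bool" where
  "rotation E Q Q' \<longleftrightarrow> (\<exists>i. i + 2 < length Q \<and> E (last Q) (Q ! i)
     \<and> Q' = take (Suc i) Q @ rev (drop (Suc i) Q))"

definition posa_S :: "('a \<Rightarrow> 'a \<Rightarrow> bool) \<Rightarrow> 'a list \<Rightarrow> 'a set" where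
  "posa_S E P = {last Q | Q. (rotation E)\<^sup>*\<^sup>* P Q}"

definition nbhd :: "'a set \<Rightarrow> ('a \<Rightarrow> 'a \<Rightarrow> bool) \<Rightarrow> 'a set \<Rightarrow> 'a set" where
  "nbhd V E S = {v \<in> V - S. \<exists>u \<in> S. E v u}"

definition edges_in :: "('a \<Rightarrow> 'a \<Rightarrow> bool) \<Rightarrow> 'a set \<Rightarrow> nat" where
  "edges_in E A = card {{u, v} | u v. u \<in> A \<and> v \<in> A \<and> E u v}"

end

theory Submission imports Defs begin

lemma path_succ: "is_path V E xs \<longleftrightarrow> xs \<noteq> [] \<and> distinct xs \<and> set xs \<subseteq> V \<and> successively E xs"
  unfolding is_path_def successively_conv_nth by blast

lemma rot_path:
  assumes g: "fin_graph V E" and p: "is_path V E Q" and r: "rotation E Q Q'"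
  shows "is_path V E Q' \<and> hd Q' = hd Q \<and> length Q' = length Q"
proof -
  obtain i where i: "i + 2 < length Q" "E (last Q) (Q ! i)"
    and Q': "Q' = take (Suc i) Q @ rev (drop (Suc i) Q)" using r unfolding rotation_def by blast
  have sym: "\<And>x y. E x y \<Longrightarrow> E y x" using g unfolding fin_graph_def by blast
  have d: "distinct Q" "set Q \<subseteq> V" "successively E Q" "Q \<noteq> []" using p unfolding path_succ by auto
  have len: "length Q' = length Q" using Q' i by simp
  have dist: "distinct Q'" unfolding Q' using d(1)
    by (simp add: set_take_disj_set_drop_if_distinct)
  have st: "set Q' = set Q" unfolding Q'
    by (metis append_take_drop_id set_append set_rev)
  have s1: "successively E (take (Suc i) Q)" "successively E (drop (Suc i) Q)"
    using d(3) by (metis append_take_drop_id successively_append_iff)+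
  have s2: "successively E (rev (drop (Suc i) Q))"
    unfolding successively_rev using s1(2) sym by (rule successively_mono) 
  have lt: "last (take (Suc i) Q) = Q ! i" using i by (simp add: take_Suc_conv_app_nth)
  have hr: "hd (rev (drop (Suc i) Q)) = last Q" using i by (simp add: hd_rev)
  have "successively E Q'" unfolding Q' successively_append_iff using s1 s2 lt hr i sym by auto
  moreover have "hd Q' = hd Q" unfolding Q' using i by (cases Q) auto
  ultimately show ?thesis using dist st len d unfolding path_succ by (metis length_0_conv)
qed

lemma reach_longest:
  assumes g: "fin_graph V E" and l: "longest_path_from V E x0 P" and r: "(rotation E)\<^sup>*\<^sup>* P Q"
  shows "longest_path_from V E x0 Q"
  using r
proof (induction rule: rtranclp_induct)
  case base then show ?case using l .
next
  case (step Q Q')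
  then show ?case using rot_path[OF g _ step(2)] unfolding longest_path_from_def by metis
qed

lemma nb_in_path:
  assumes g: "fin_graph V E" and l: "longest_path_from V E x0 Q" and e: "E (last Q) u"
  shows "u \<in> set Q"
proof (rule ccontr)
  assume u: "u \<notin> set Q"
  have uV: "u \<in> V" using g e unfolding fin_graph_def by blast
  have p: "is_path V E Q" "hd Q = x0" using l unfolding longest_path_from_def by auto
  have "is_path V E (Q @ [u])" using p u uV e unfolding path_succ successively_append_iff by auto
  moreover have "hd (Q @ [u]) = x0" using p unfolding path_succ by auto
  ultimately have "length (Q @ [u]) \<le> length Q" using l unfolding longest_path_from_def by blast
  then show False by simp
qed

lemma keyL:
  assumes g: "fin_graph V E" and l: "longest_path_from V E x0 P" and r: "(rotation E)\<^sup>*\<^sup>* P Q"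
    and e: "E t (last Q)" and hS: "\<forall>u\<in>posa_S E P. E t u \<longrightarrow> u = last Q"
  shows "t = Q ! (length Q - 2)"
proof -
  have sym: "\<And>x y. E x y \<Longrightarrow> E y x" and irr: "\<And>x. \<not> E x x" using g unfolding fin_graph_def by blast+
  have lQ: "longest_path_from V E x0 Q" using reach_longest[OF g l r] .
  have pQ: "is_path V E Q" using lQ unfolding longest_path_from_def by auto
  have ne: "Q \<noteq> []" and dQ: "distinct Q" using pQ unfolding is_path_def by auto
  have "t \<in> set Q" using nb_in_path[OF g lQ sym[OF e]] .
  then obtain k where k: "k < length Q" "Q ! k = t" by (metis in_set_conv_nth)
  have lastQ: "last Q = Q ! (length Q - 1)" using ne by (simp add: last_conv_nth)
  have "k \<noteq> length Q - 1" using k lastQ e irr by metis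
  moreover have "\<not> k + 2 < length Q"
  proof
    assume kk: "k + 2 < length Q"
    define Q' where "Q' = take (Suc k) Q @ rev (drop (Suc k) Q)"
    have "rotation E Q Q'" unfolding rotation_def Q'_def using kk k e sym by blast
    then have r': "(rotation E)\<^sup>*\<^sup>* P Q'" using r by simp
    have "last Q' = Q ! Suc k" unfolding Q'_def using kk by (simp add: hd_drop_conv_nth hd_rev[symmetric] last_rev)
    then have inS: "Q ! Suc k \<in> posa_S E P" unfolding posa_S_def using r' by (metis (mono_tags, lifting) mem_Collect_eq)
    have "E t (Q ! Suc k)" using pQ kk k unfolding is_path_def by auto
    then have "Q ! Suc k = Q ! (length Q - 1)" using hS inS lastQ by auto
    then have "Suc k = length Q - 1" using dQ kk by (simp add: nth_eq_iff_index_eq)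
    then show False using kk by simp
  qed
  ultimately have "k = length Q - 2" using k by linarith
  then show ?thesis using k by simp
qed

theorem lemma2p2:
  fixes V :: "'a set" and E :: "'a \<Rightarrow> 'a \<Rightarrow> bool" and x0 :: 'a and P :: "'a list"
    and S T T1 W :: "'a set" and Estar :: "'a \<Rightarrow> 'a \<Rightarrow> bool" and dstar :: "'a \<Rightarrow> nat"
  assumes graph: "fin_graph V E"
    and mindeg: "\<forall>v \<in> V. degree V E v \<ge> 3"
    and x0: "x0 \<in> V"
    and longest: "longest_path_from V E x0 P"
  defines "S \<equiv> posa_S E P"
    and "T \<equiv> nbhd V E S"
    and "T1 \<equiv> {t \<in> T. card {u \<in> S. E t u} = 1}"
    and "W \<equiv> S \<union> (T - T1)"
    and "Estar \<equiv> (\<lambda>u v. u \<in> W \<and> v \<in> W \<and> E u v \<and> (u \<in> S \<or> v \<in> S))"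
    and "dstar \<equiv> (\<lambda>v. card {u \<in> W. Estar v u})"
  shows "(\<forall>v \<in> S. dstar v = 2 \<longrightarrow>
            \<not> ((\<exists>a \<in> S. dstar a = 2 \<and> Estar v a) \<and> (\<exists>b \<in> T - T1. Estar v b)))
       \<and> (\<forall>\<sigma>::real. \<sigma> > 0 \<longrightarrow>
            real (edges_in E (S \<union> T)) = (1 + \<sigma>) * (real (card S) + real (card T)) \<longrightarrow>
              real (card S) - 2 * \<sigma> * (real (card S) + real (card T)) \<le> real (card T1)
            \<and> card T1 \<le> card S
            \<and> (\<Sum>v \<in> W. real (dstar v) - 2) \<le> 2 * \<sigma> * (real (card S) + real (card T)))"
proof -
  have sym: "\<And>x y. E x y \<Longrightarrow> E y x" and irr: "\<And>x. \<not> E x x"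
    and EV: "\<And>x y. E x y \<Longrightarrow> x \<in> V \<and> y \<in> V" and finV: "finite V"
    using graph unfolding fin_graph_def by blast+
  have Sreach: "\<And>y. y \<in> S \<Longrightarrow> \<exists>Q. (rotation E)\<^sup>*\<^sup>* P Q \<and> last Q = y"
    unfolding S_def posa_S_def by blast
  have SV: "S \<subseteq> V"
  proof
    fix y assume "y \<in> S"
    then obtain Q where Q: "(rotation E)\<^sup>*\<^sup>* P Q" "last Q = y" using Sreach by blast
    have "is_path V E Q" using reach_longest[OF graph longest Q(1)] unfolding longest_path_from_def by auto
    then show "y \<in> V" using Q(2) unfolding is_path_def by (metis last_in_set subsetD)
  qed
  have finS: "finite S" using SV finV finite_subset by blast
  have TV: "T \<subseteq> V" and ST: "S \<inter> T = {}" unfolding T_def nbhd_def by auto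
  have finT: "finite T" using TV finV finite_subset by blast
  have T1T: "T1 \<subseteq> T" unfolding T1_def by auto
  have finT1: "finite T1" using T1T finT finite_subset by blast
  have finW: "finite W" unfolding W_def using finS finT by auto
  have inT: "\<And>u w. u \<in> V \<Longrightarrow> u \<notin> S \<Longrightarrow> w \<in> S \<Longrightarrow> E u w \<Longrightarrow> u \<in> T"
    unfolding T_def nbhd_def by blast
  have pen: "\<And>y t t'. y \<in> S \<Longrightarrow> E t y \<Longrightarrow> (\<forall>w\<in>S. E t w \<longrightarrow> w = y) \<Longrightarrow>
       E t' y \<Longrightarrow> (\<forall>w\<in>S. E t' w \<longrightarrow> w = y) \<Longrightarrow> t = t'"
  proof -
    fix y t t' assume y: "y \<in> S" and h: "E t y" "\<forall>w\<in>S. E t w \<longrightarrow> w = y"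
      "E t' y" "\<forall>w\<in>S. E t' w \<longrightarrow> w = y"
    obtain Q where Q: "(rotation E)\<^sup>*\<^sup>* P Q" "last Q = y" using Sreach[OF y] by blast
    have "t = Q ! (length Q - 2)" using keyL[OF graph longest Q(1)] h(1,2) Q(2) S_def by auto
    moreover have "t' = Q ! (length Q - 2)" using keyL[OF graph longest Q(1)] h(3,4) Q(2) S_def by auto
    ultimately show "t = t'" by simp
  qed
  have T1uniq: "\<And>u. u \<in> T1 \<Longrightarrow> \<exists>y. y \<in> S \<and> E u y \<and> (\<forall>w\<in>S. E u w \<longrightarrow> w = y)"
  proof -
    fix u assume "u \<in> T1"
    then have "card {w \<in> S. E u w} = 1" unfolding T1_def by auto
    then obtain y where "{w \<in> S. E u w} = {y}" by (rule card_1_singletonE)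
    then show "\<exists>y. y \<in> S \<and> E u y \<and> (\<forall>w\<in>S. E u w \<longrightarrow> w = y)" by blast
  qed
  have dstarS: "\<And>v. v \<in> S \<Longrightarrow> {u \<in> W. Estar v u} = {u \<in> V. E v u} - T1"
  proof -
    fix v assume v: "v \<in> S"
    show "{u \<in> W. Estar v u} = {u \<in> V. E v u} - T1"
    proof
      show "{u \<in> W. Estar v u} \<subseteq> {u \<in> V. E v u} - T1"
        unfolding Estar_def W_def using EV ST T1T by auto
      show "{u \<in> V. E v u} - T1 \<subseteq> {u \<in> W. Estar v u}"
      proof
        fix u assume u: "u \<in> {u \<in> V. E v u} - T1"
        have "u \<in> W"
        proof (cases "u \<in> S")
          case False
          then have "u \<in> T" using inT[of u v] u v sym by auto
          then show ?thesis using u unfolding W_def by auto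
        qed (auto simp: W_def)
        then show "u \<in> {u \<in> W. Estar v u}" using u v unfolding Estar_def W_def by auto
      qed
    qed
  qed
  have dstarT: "\<And>v. v \<in> T - T1 \<Longrightarrow> {u \<in> W. Estar v u} = {u \<in> S. E v u}"
    unfolding Estar_def W_def using ST by auto
  have part1: "\<forall>v \<in> S. dstar v = 2 \<longrightarrow>
            \<not> ((\<exists>a \<in> S. dstar a = 2 \<and> Estar v a) \<and> (\<exists>b \<in> T - T1. Estar v b))"
  proof (intro ballI impI notI)
    fix v assume v: "v \<in> S" and dv: "dstar v = 2"
      and ex: "(\<exists>a \<in> S. dstar a = 2 \<and> Estar v a) \<and> (\<exists>b \<in> T - T1. Estar v b)"
    then obtain a b where a: "a \<in> S" "dstar a = 2" "Estar v a" and b: "b \<in> T - T1" "Estar v b" by blast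
    have ab: "a \<noteq> b" using a b ST by auto
    have sub: "{a, b} \<subseteq> {u \<in> W. Estar v u}" using a b unfolding Estar_def by auto
    have "card {a, b} = card {u \<in> W. Estar v u}" using ab dv unfolding dstar_def by simp
    then have eq: "{a, b} = {u \<in> W. Estar v u}" using sub finW by (intro card_subset_eq) auto
    have vonly: "\<forall>w\<in>S. E v w \<longrightarrow> w = a"
    proof (intro ballI impI)
      fix w assume "w \<in> S" "E v w"
      then have "w \<in> {u \<in> W. Estar v u}" using v unfolding Estar_def W_def by auto
      then show "w = a" using eq b \<open>w \<in> S\<close> ST by auto
    qed
    have aV: "a \<in> V" using SV a by auto
    have Eva: "E v a" using a unfolding Estar_def by auto
    have "\<not> {u \<in> V. E a u} \<subseteq> {u \<in> W. Estar a u}"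
    proof
      assume "{u \<in> V. E a u} \<subseteq> {u \<in> W. Estar a u}"
      then have "card {u \<in> V. E a u} \<le> card {u \<in> W. Estar a u}" using finW by (intro card_mono) auto
      then show False using a(2) mindeg aV unfolding dstar_def degree_def by fastforce
    qed
    then obtain c where c: "c \<in> V" "E a c" "c \<notin> {u \<in> W. Estar a u}" by blast
    have "c \<notin> W" using c a unfolding Estar_def W_def by auto
    then have cS: "c \<notin> S" and "c \<notin> T - T1" unfolding W_def by auto
    moreover have "c \<in> T" using inT[of c a] c(1,2) cS a(1) sym[OF c(2)] by blast
    ultimately have "c \<in> T1" by auto
    then obtain y where y: "y \<in> S" "E c y" "\<forall>w\<in>S. E c w \<longrightarrow> w = y" using T1uniq by blast
    have "y = a" using y(3) a(1) sym[OF c(2)] by blast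
    then have "v = c" using pen[of a v c] a(1) Eva vonly y by blast
    then show False using v cS by simp
  qed
  have symiff: "\<And>x y. E x y = E y x" using sym by blast
  have t1s: "card T1 \<le> card S"
  proof -
    define f where "f u = (SOME y. y \<in> S \<and> E u y \<and> (\<forall>w\<in>S. E u w \<longrightarrow> w = y))" for u
    have f: "\<And>u. u \<in> T1 \<Longrightarrow> f u \<in> S \<and> E u (f u) \<and> (\<forall>w\<in>S. E u w \<longrightarrow> w = f u)"
      unfolding f_def using T1uniq by (rule someI_ex)
    have "inj_on f T1"
    proof (rule inj_onI)
      fix u u' assume "u \<in> T1" "u' \<in> T1" "f u = f u'"
      then show "u = u'" using f[of u] f[of u'] pen[of "f u" u u'] sym by metis
    qed
    moreover have "f ` T1 \<subseteq> S" using f by auto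
    ultimately show ?thesis using finS by (rule card_inj_on_le)
  qed
  define D1 where "D1 = (SIGMA u:T1. {w \<in> S. E u w})"
  have cD1: "card D1 = card T1"
    unfolding D1_def using finT1 finS by (subst card_SigmaI) (auto simp: T1_def)
  have finD1: "finite D1" unfolding D1_def using finT1 finS by auto
  define D2 where "D2 = prod.swap ` D1"
  have cD2: "card D2 = card T1" unfolding D2_def using cD1 by (simp add: card_image)
  have D2eq: "D2 = (SIGMA v:S. {u \<in> T1. E v u})" unfolding D2_def D1_def by (auto simp: symiff image_iff)
  have cD2': "card D2 = (\<Sum>v\<in>S. card {u \<in> T1. E v u})"
    unfolding D2eq using finS finT1 by (subst card_SigmaI) auto
  define Dst where "Dst = (SIGMA v:W. {u \<in> W. Estar v u})"
  have cDst: "card Dst = (\<Sum>v\<in>W. dstar v)"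
    unfolding Dst_def dstar_def using finW by (subst card_SigmaI) auto
  define D where "D = {(u, v). u \<in> S \<union> T \<and> v \<in> S \<union> T \<and> E u v}"
  have "D \<subseteq> (S \<union> T) \<times> (S \<union> T)" unfolding D_def by auto
  moreover have "finite ((S \<union> T) \<times> (S \<union> T))" using finS finT by simp
  ultimately have finD: "finite D" by (rule finite_subset)
  have WST: "W \<subseteq> S \<union> T" unfolding W_def by auto
  have "Dst \<union> D1 \<union> D2 \<subseteq> D" unfolding Dst_def D1_def D2eq D_def Estar_def using WST T1T by auto
  moreover have "Dst \<inter> D1 = {}" "Dst \<inter> D2 = {}" "D1 \<inter> D2 = {}"
    unfolding Dst_def D2eq D1_def W_def using ST T1T by auto
  ultimately have cD: "card Dst + card D1 + card D2 \<le> card D" using finD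
    by (metis (no_types, lifting) card_Un_disjoint card_mono finite_Un finite_subset Int_Un_distrib2 Un_empty)
  define Ed where "Ed = {{u, v} | u v. u \<in> S \<union> T \<and> v \<in> S \<union> T \<and> E u v}"
  have Edim: "Ed = (\<lambda>(u, v). {u, v}) ` D" unfolding Ed_def D_def by auto
  have finEd: "finite Ed" unfolding Edim using finD by auto
  have Dsub: "D \<subseteq> (\<Union>e\<in>Ed. {(x, y). {x, y} = e})" unfolding Ed_def D_def by auto
  have fibc: "\<And>e. e \<in> Ed \<Longrightarrow> finite {(x, y). {x, y} = e} \<and> card {(x, y). {x, y} = e} \<le> 2"
  proof -
    fix e assume "e \<in> Ed"
    then obtain a b where e: "e = {a, b}" unfolding Ed_def by blast
    have sub: "{(x, y). {x, y} = e} \<subseteq> {(a,b),(b,a)}"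
    proof
      fix p assume "p \<in> {(x, y). {x, y} = e}"
      then obtain x y where p: "p = (x, y)" "{x, y} = {a, b}" unfolding e by (cases p) simp
      then have "(x = a \<and> y = b) \<or> (x = b \<and> y = a)" by (simp add: doubleton_eq_iff)
      then show "p \<in> {(a,b),(b,a)}" using p(1) by blast
    qed
    have f2: "finite {(a,b),(b,a)}" by simp
    have fin: "finite {(x, y). {x, y} = e}" using sub f2 by (rule finite_subset)
    from f2 have "card {(x, y). {x, y} = e} \<le> card {(a,b),(b,a)}" using sub by (rule card_mono)
    also have "\<dots> \<le> 2" by (cases "a = b") auto
    finally have "card {(x, y). {x, y} = e} \<le> 2" .
    then show "finite {(x, y). {x, y} = e} \<and> card {(x, y). {x, y} = e} \<le> 2"
      using fin by (rule conjI[rotated])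
  qed
  have "card D \<le> card (\<Union>e\<in>Ed. {(x, y). {x, y} = e})"
    using Dsub finEd fibc by (intro card_mono) auto
  also have "\<dots> \<le> (\<Sum>e\<in>Ed. card {(x, y). {x, y} = e})" using finEd by (rule card_UN_le)
  also have "\<dots> \<le> (\<Sum>e\<in>Ed. 2)" using fibc by (intro sum_mono) blast
  also have "\<dots> = 2 * card Ed" by simp
  finally have cDE: "card D \<le> 2 * edges_in E (S \<union> T)" unfolding edges_in_def Ed_def .
  have cW: "card W = card S + (card T - card T1)" unfolding W_def using finS finT ST T1T
    by (subst card_Un_disjoint) (auto simp: card_Diff_subset finT1)
  have t1t: "card T1 \<le> card T" using T1T finT by (rule card_mono[rotated]) 
  have lowS: "\<And>v. v \<in> S \<Longrightarrow> real (dstar v) - 2 \<ge> 1 - real (card {u \<in> T1. E v u})"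
  proof -
    fix v assume v: "v \<in> S"
    have fN: "finite {u \<in> V. E v u}" using finV by auto
    have c1: "card {u \<in> V. E v u} = card ({u \<in> V. E v u} \<inter> T1) + card ({u \<in> V. E v u} - T1)"
      using fN by (rule card_Int_Diff)
    have c2: "{u \<in> V. E v u} \<inter> T1 = {u \<in> T1. E v u}" using T1T TV by auto
    have c3: "dstar v = card ({u \<in> V. E v u} - T1)" unfolding dstar_def using dstarS[OF v] by simp
    have c4: "card {u \<in> V. E v u} \<ge> 3" using mindeg v SV unfolding degree_def by auto
    have "card {u \<in> V. E v u} = card {u \<in> T1. E v u} + dstar v" using c1 unfolding c2 c3[symmetric] .
    then have "3 \<le> dstar v + card {u \<in> T1. E v u}" using c4 by linarith
    then have "3 \<le> real (dstar v) + real (card {u \<in> T1. E v u})"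
      by (metis of_nat_add of_nat_le_iff of_nat_numeral)
    then show "real (dstar v) - 2 \<ge> 1 - real (card {u \<in> T1. E v u})" by linarith
  qed
  have lowT: "\<And>v. v \<in> T - T1 \<Longrightarrow> real (dstar v) - 2 \<ge> 0"
  proof -
    fix v assume v: "v \<in> T - T1"
    have "dstar v = card {u \<in> S. E v u}" unfolding dstar_def using dstarT[OF v] by simp
    moreover have "card {u \<in> S. E v u} \<noteq> 1" using v unfolding T1_def by auto
    moreover have "{u \<in> S. E v u} \<noteq> {}" using v unfolding T_def nbhd_def by auto
    then have "card {u \<in> S. E v u} \<noteq> 0" using finS by auto
    ultimately show "real (dstar v) - 2 \<ge> 0" by simp
  qed
  have sumsplit: "(\<Sum>v \<in> W. real (dstar v) - 2) = (\<Sum>v \<in> S. real (dstar v) - 2) + (\<Sum>v \<in> T - T1. real (dstar v) - 2)"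
    unfolding W_def using finS finT ST by (intro sum.union_disjoint) auto
  have "(\<Sum>v \<in> S. real (dstar v) - 2) \<ge> (\<Sum>v \<in> S. 1 - real (card {u \<in> T1. E v u}))"
    using lowS by (rule sum_mono)
  also have "(\<Sum>v \<in> S. 1 - real (card {u \<in> T1. E v u})) = real (card S) - real (card T1)"
    using cD2 cD2' by (simp add: sum_subtractf of_nat_sum[symmetric])
  finally have lS: "(\<Sum>v \<in> S. real (dstar v) - 2) \<ge> real (card S) - real (card T1)" .
  have lT: "(\<Sum>v \<in> T - T1. real (dstar v) - 2) \<ge> 0" using lowT by (rule sum_nonneg)
  have sumW: "(\<Sum>v \<in> W. real (dstar v) - 2) = real (card Dst) - 2 * real (card W)"
  proof -
    have "(\<Sum>v\<in>W. real (dstar v)) = real (card Dst)" using cDst by simp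
    then show ?thesis by (simp add: sum_subtractf)
  qed
  show ?thesis
  proof (intro conjI part1 allI impI)
    fix \<sigma> :: real assume "\<sigma> > 0" and e: "real (edges_in E (S \<union> T)) = (1 + \<sigma>) * (real (card S) + real (card T))"
    have A: "real (card Dst) + 2 * real (card T1) \<le> 2 * real (edges_in E (S \<union> T))"
      using cD cDE cD1 cD2 by linarith
    have B: "real (card W) = real (card S) + real (card T) - real (card T1)" using cW t1t by simp
    show up: "(\<Sum>v \<in> W. real (dstar v) - 2) \<le> 2 * \<sigma> * (real (card S) + real (card T))"
      using sumW A B e by (simp add: algebra_simps)
    show "real (card S) - 2 * \<sigma> * (real (card S) + real (card T)) \<le> real (card T1)"
      using up sumsplit lS lT by linarith
    show "card T1 \<le> card S" by (rule t1s)
  qed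
qed

end
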